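(* For any nonempty set $X$, the free inverse monoid $\operatorname{FIM}(X)$, regarded as an $F$-inverse monoid, is not finitely presented: there are no finite set $Y$ and finite relation $R$ on $\mathbb{I}\mathfrak{m}_Y$ such that $\operatorname{FInv}\langle Y\mid R\rangle\cong\operatorname{FIM}(X)$ as $F$-inverse monoids.
   Context: $F$-inverse monoids are inverse monoids in which each $\sigma$-class has a greatest element $s^{\mathfrak m}$; they form a variety in signature $(\cdot,1,{}^{-1},{}^{\mathfrak m})$. $\operatorname{FIM}(X)$ is $F$-inverse, with $(w_{\operatorname{FIM}(X)})^{\mathfrak m}$ equal to the value of the freely reduced form of $w$. $\mathbb{I}\mathfrak{m}_Y$ is the set of terms $u_0v_1^{\mathfrak m}u_1\cdots v_n^{\mathfrak m}u_n$ with $u_i,v_i\in(Y\cup Y^{-1})^*$, and $\operatorname{FInv}\langle Y\mid R\rangle$ is the quotient of the free $F$-inverse monoid on $Y$ by the congruence generated by $R$. *)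

theory Defs
  imports Main
begin

text \<open>Terms in the signature (multiplication, 1, inverse, m) over generators.\<close>
datatype 'a ftm = G 'a | E | M "'a ftm" "'a ftm" | I "'a ftm" | Mx "'a ftm"

fun gens :: "'a ftm \<Rightarrow> 'a set" where
  "gens (G a) = {a}" | "gens E = {}" | "gens (M s t) = gens s \<union> gens t"
| "gens (I t) = gens t" | "gens (Mx t) = gens t"

fun mfree :: "'a ftm \<Rightarrow> bool" where
  "mfree (G a) = True" | "mfree E = True" | "mfree (M s t) = (mfree s \<and> mfree t)"
| "mfree (I t) = mfree t" | "mfree (Mx t) = False"

definition ftms :: "'a set \<Rightarrow> 'a ftm set" where
  "ftms Y = {t. gens t \<subseteq> Y}"

definition itms :: "'a set \<Rightarrow> 'a ftm set" where
  "itms X = {t. gens t \<subseteq> X \<and> mfree t}"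

definition inv_monoid_rel ::
  "'t set \<Rightarrow> ('t \<Rightarrow> 't \<Rightarrow> bool) \<Rightarrow> ('t \<Rightarrow> 't \<Rightarrow> 't) \<Rightarrow> 't \<Rightarrow> ('t \<Rightarrow> 't) \<Rightarrow> bool" where
  "inv_monoid_rel C eq mul one iv \<longleftrightarrow>
     (\<forall>x\<in>C. \<forall>y\<in>C. \<forall>z\<in>C. eq (mul (mul x y) z) (mul x (mul y z))) \<and>
     (\<forall>x\<in>C. eq (mul one x) x \<and> eq (mul x one) x) \<and>
     (\<forall>x\<in>C. eq (mul (mul x (iv x)) x) x \<and> eq (mul (mul (iv x) x) (iv x)) (iv x)) \<and>
     (\<forall>e\<in>C. \<forall>f\<in>C. eq (mul e e) e \<and> eq (mul f f) f \<longrightarrow> eq (mul e f) (mul f e))"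

definition sigma_rel :: "'t set \<Rightarrow> ('t \<Rightarrow> 't \<Rightarrow> bool) \<Rightarrow> ('t \<Rightarrow> 't \<Rightarrow> 't) \<Rightarrow> 't \<Rightarrow> 't \<Rightarrow> bool" where
  "sigma_rel C eq mul s t \<longleftrightarrow> (\<exists>e\<in>C. eq (mul e e) e \<and> eq (mul e s) (mul e t))"

definition leq_rel :: "('t \<Rightarrow> 't \<Rightarrow> bool) \<Rightarrow> ('t \<Rightarrow> 't \<Rightarrow> 't) \<Rightarrow> ('t \<Rightarrow> 't) \<Rightarrow> 't \<Rightarrow> 't \<Rightarrow> bool" where
  "leq_rel eq mul iv s t \<longleftrightarrow> eq s (mul (mul s (iv s)) t)"

definition finv_monoid_rel ::
  "'t set \<Rightarrow> ('t \<Rightarrow> 't \<Rightarrow> bool) \<Rightarrow> ('t \<Rightarrow> 't \<Rightarrow> 't) \<Rightarrow> 't \<Rightarrow> ('t \<Rightarrow> 't) \<Rightarrow> ('t \<Rightarrow> 't) \<Rightarrow> bool" where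
  "finv_monoid_rel C eq mul one iv mx \<longleftrightarrow> inv_monoid_rel C eq mul one iv \<and>
     (\<forall>s\<in>C. sigma_rel C eq mul (mx s) s \<and>
        (\<forall>t\<in>C. sigma_rel C eq mul t s \<longrightarrow> leq_rel eq mul iv t (mx s)))"

definition icong :: "'a ftm set \<Rightarrow> 'a ftm rel \<Rightarrow> bool" where
  "icong T \<theta> \<longleftrightarrow> equiv T \<theta> \<and>
     (\<forall>a b c d. (a,b) \<in> \<theta> \<longrightarrow> (c,d) \<in> \<theta> \<longrightarrow> (M a c, M b d) \<in> \<theta>) \<and>
     (\<forall>a b. (a,b) \<in> \<theta> \<longrightarrow> (I a, I b) \<in> \<theta>)"

definition fcong :: "'a ftm set \<Rightarrow> 'a ftm rel \<Rightarrow> bool" where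
  "fcong T \<theta> \<longleftrightarrow> icong T \<theta> \<and> (\<forall>a b. (a,b) \<in> \<theta> \<longrightarrow> (Mx a, Mx b) \<in> \<theta>)"

definition fim_cong :: "'a set \<Rightarrow> 'a ftm rel" where
  "fim_cong X = \<Inter>{\<theta>. icong (itms X) \<theta> \<and> inv_monoid_rel (itms X) (\<lambda>a b. (a,b) \<in> \<theta>) M E I}"

text \<open>Words over generators and their inverses (True = inverted letter).\<close>
type_synonym 'a word = "('a \<times> bool) list"

definition word_tm :: "'a word \<Rightarrow> 'a ftm" where
  "word_tm w = foldr (\<lambda>(a,b) t. M (if b then I (G a) else G a) t) w E"

fun tword :: "'a ftm \<Rightarrow> 'a word" where
  "tword (G a) = [(a, False)]" | "tword E = []" | "tword (M s t) = tword s @ tword t"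
| "tword (I t) = rev (map (\<lambda>(a,b). (a, \<not> b)) (tword t))" | "tword (Mx t) = tword t"

definition free_red :: "'a word \<Rightarrow> 'a word" where
  "free_red w = foldr (\<lambda>x acc. case acc of [] \<Rightarrow> [x]
      | y # ys \<Rightarrow> (if fst x = fst y \<and> snd x \<noteq> snd y then ys else x # acc)) w []"

definition fim_mx :: "'a ftm \<Rightarrow> 'a ftm" where
  "fim_mx t = word_tm (free_red (tword t))"

text \<open>Elements of Im_Y: u0 v1^m u1 ... vn^m un, encoded as (u0, [(v1,u1),...,(vn,un)]).\<close>
type_synonym 'a imterm = "'a word \<times> ('a word \<times> 'a word) list"

definition im_over :: "'a set \<Rightarrow> 'a imterm \<Rightarrow> bool" where
  "im_over Y p \<longleftrightarrow> fst ` set (fst p) \<subseteq> Y \<and>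
     (\<forall>(v,u) \<in> set (snd p). fst ` set v \<subseteq> Y \<and> fst ` set u \<subseteq> Y)"

definition im_tm :: "'a imterm \<Rightarrow> 'a ftm" where
  "im_tm p = M (word_tm (fst p))
     (foldr (\<lambda>(v,u) t. M (Mx (word_tm v)) (M (word_tm u) t)) (snd p) E)"

definition finv_cong :: "'a set \<Rightarrow> ('a imterm \<times> 'a imterm) set \<Rightarrow> 'a ftm rel" where
  "finv_cong Y R = \<Inter>{\<theta>. fcong (ftms Y) \<theta> \<and>
      finv_monoid_rel (ftms Y) (\<lambda>a b. (a,b) \<in> \<theta>) M E I Mx \<and>
      (\<forall>(p,q) \<in> R. (im_tm p, im_tm q) \<in> \<theta>)}"

text \<open>Isomorphism of F-inverse monoids FInv<Y|R> and FIM(X), via a representative map.\<close>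
definition finv_iso_fim :: "'b set \<Rightarrow> ('b imterm \<times> 'b imterm) set \<Rightarrow> 'a set \<Rightarrow> bool" where
  "finv_iso_fim Y R X \<longleftrightarrow> (\<exists>f :: 'b ftm \<Rightarrow> 'a ftm.
     (\<forall>s\<in>ftms Y. f s \<in> itms X) \<and>
     (\<forall>s\<in>ftms Y. \<forall>t\<in>ftms Y. (s,t) \<in> finv_cong Y R \<longleftrightarrow> (f s, f t) \<in> fim_cong X) \<and>
     (\<forall>u\<in>itms X. \<exists>s\<in>ftms Y. (f s, u) \<in> fim_cong X) \<and>
     (\<forall>s\<in>ftms Y. \<forall>t\<in>ftms Y. (f (M s t), M (f s) (f t)) \<in> fim_cong X) \<and>
     (f E, E) \<in> fim_cong X \<and>
     (\<forall>s\<in>ftms Y. (f (I s), I (f s)) \<in> fim_cong X) \<and>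
     (\<forall>s\<in>ftms Y. (f (Mx s), fim_mx (f s)) \<in> fim_cong X))"

end

theory Submission
  imports Defs
begin


definition cancel :: "('a \<times> bool) \<Rightarrow> ('a \<times> bool) \<Rightarrow> bool" where
  "cancel x y \<longleftrightarrow> fst x = fst y \<and> snd x \<noteq> snd y"

definition step :: "('a \<times> bool) \<Rightarrow> 'a word \<Rightarrow> 'a word" where
  "step x acc = (case acc of [] \<Rightarrow> [x] | y # ys \<Rightarrow> (if cancel x y then ys else x # acc))"

definition flp :: "('a \<times> bool) \<Rightarrow> ('a \<times> bool)" where "flp x = (fst x, \<not> snd x)"

definition winv :: "'a word \<Rightarrow> 'a word" where
  "winv w = rev (map (\<lambda>(a,b). (a, \<not> b)) w)"

fun rd :: "'a word \<Rightarrow> bool" where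
  "rd [] = True" | "rd [x] = True" | "rd (x # y # ys) = (\<not> cancel x y \<and> rd (y # ys))"

lemma free_red_foldr: "free_red w = foldr step w []"
  unfolding free_red_def step_def cancel_def by simp

lemma free_red_Cons: "free_red (x # w) = step x (free_red w)"
  by (simp add: free_red_foldr)

lemma free_red_Nil[simp]: "free_red [] = []"
  by (simp add: free_red_foldr)

lemma free_red_append: "free_red (u @ v) = foldr step u (free_red v)"
  by (simp add: free_red_foldr)

lemma rd_step: "rd a \<Longrightarrow> rd (step x a)"
  by (cases a rule: rd.cases) (auto simp: step_def)

lemma rd_foldr: "rd a \<Longrightarrow> rd (foldr step u a)"
  by (induction u) (auto intro: rd_step)

lemma rd_free_red[simp]: "rd (free_red w)"
  by (simp add: free_red_foldr rd_foldr)

lemma free_red_rd: "rd w \<Longrightarrow> free_red w = w"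
proof (induction w rule: rd.induct)
  case (3 x y ys) then show ?case by (simp add: free_red_Cons step_def)
qed (auto simp: free_red_Cons step_def)

lemma free_red_idem[simp]: "free_red (free_red w) = free_red w"
  by (simp add: free_red_rd)

lemma cancel_flp: "cancel x y \<Longrightarrow> y = flp x"
  by (cases x; cases y) (auto simp: cancel_def flp_def)

lemma step_flp_step: "rd a \<Longrightarrow> step (flp x) (step x a) = a"
proof (cases a rule: rd.cases)
  case 1 then show ?thesis by (simp add: step_def cancel_def flp_def)
next
  case (2 y)
  then show ?thesis
    by (cases "cancel x y") (auto simp: step_def cancel_def flp_def prod_eq_iff)
next
  case (3 y z zs)
  assume "rd a"
  show ?thesis
  proof (cases "cancel x y")
    case True
    then have "y = flp x" by (rule cancel_flp)
    with True 3 \<open>rd a\<close> show ?thesis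
      by (auto simp: step_def cancel_def flp_def)
  next
    case False
    with 3 show ?thesis by (auto simp: step_def cancel_def flp_def)
  qed
qed

lemma flp_flp[simp]: "flp (flp x) = x" by (simp add: flp_def)

lemma step_step_flp: "rd a \<Longrightarrow> step x (step (flp x) a) = a"
  using step_flp_step[of a "flp x"] by simp

lemma winv_Cons: "winv (x # u) = winv u @ [flp x]"
  by (simp add: winv_def flp_def split_def)

lemma winv_append: "winv (u @ v) = winv v @ winv u"
  by (simp add: winv_def)

lemma winv_winv[simp]: "winv (winv u) = u"
  by (induction u) (auto simp: winv_def split_def)

lemma foldr_winv_cancel: "rd a \<Longrightarrow> foldr step (winv u @ u) a = a"
proof (induction u arbitrary: a)
  case (Cons x u)
  have "foldr step (winv (x # u) @ x # u) a
      = foldr step (winv u) (step (flp x) (step x (foldr step u a)))"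
    by (simp add: winv_Cons)
  also have "\<dots> = foldr step (winv u) (foldr step u a)"
    using Cons.prems by (simp add: step_flp_step rd_foldr)
  also have "\<dots> = a" using Cons by simp
  finally show ?case .
qed (simp add: winv_def)

lemma foldr_cancel_winv: "rd a \<Longrightarrow> foldr step (u @ winv u) a = a"
  using foldr_winv_cancel[of a "winv u"] by simp

lemma step_foldr_rd: "rd r \<Longrightarrow> step x (foldr step r a) = foldr step (step x r) a"
  if "rd a"
proof (cases r)
  case (Cons y ys)
  show ?thesis
  proof (cases "cancel x y")
    case True
    then have y: "y = flp x" by (rule cancel_flp)
    have "step x (foldr step r a) = step x (step (flp x) (foldr step ys a))" using Cons y by simp
    also have "\<dots> = foldr step ys a" by (rule step_step_flp) (rule rd_foldr[OF that])
    also have "step x r = ys" using True Cons by (simp add: step_def)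
    ultimately show ?thesis by simp
  next
    case False with Cons show ?thesis by (simp add: step_def)
  qed
qed (simp add: step_def)

lemma foldr_free_red: "rd a \<Longrightarrow> foldr step w a = foldr step (free_red w) a"
proof (induction w)
  case (Cons x w)
  have "foldr step (x # w) a = step x (foldr step (free_red w) a)" using Cons by simp
  also have "\<dots> = foldr step (step x (free_red w)) a"
    using Cons.prems by (simp add: step_foldr_rd)
  finally show ?case by (simp add: free_red_Cons)
qed simp

lemma free_red_append_left: "free_red (free_red u @ v) = free_red (u @ v)"
  by (simp add: free_red_append foldr_free_red[symmetric])

lemma free_red_append_right: "free_red (u @ free_red v) = free_red (u @ v)"
  by (simp add: free_red_append)

lemma free_red_append_both: "free_red (free_red u @ free_red v) = free_red (u @ v)"
  by (simp add: free_red_append_left free_red_append_right)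

lemma free_red_winv_cancel[simp]: "free_red (winv u @ u) = []"
  by (simp add: free_red_foldr foldr_winv_cancel del: foldr_append)

lemma free_red_cancel_winv[simp]: "free_red (u @ winv u) = []"
  by (simp add: free_red_foldr foldr_cancel_winv del: foldr_append)

definition gmul :: "'a word \<Rightarrow> 'a word \<Rightarrow> 'a word" where
  "gmul g h = free_red (g @ h)"

definition ginv :: "'a word \<Rightarrow> 'a word" where
  "ginv g = free_red (winv g)"

lemma gmul_assoc: "gmul (gmul g h) k = gmul g (gmul h k)"
  unfolding gmul_def by (simp add: free_red_append_left free_red_append_right)

lemma gmul_Nil_left: "gmul [] h = free_red h" by (simp add: gmul_def)
lemma gmul_Nil_right: "gmul g [] = free_red g" by (simp add: gmul_def)

lemma gmul_ginv_left[simp]: "gmul (ginv g) g = []"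
  by (simp add: gmul_def ginv_def free_red_append_left)
lemma gmul_ginv_right[simp]: "gmul g (ginv g) = []"
  by (simp add: gmul_def ginv_def free_red_append_right)

lemma rd_gmul[simp]: "rd (gmul g h)" by (simp add: gmul_def)
lemma rd_ginv[simp]: "rd (ginv g)" by (simp add: ginv_def)

lemma ginv_free_red: "ginv (free_red w) = free_red (winv w)"
proof -
  have "free_red (winv (free_red w)) = free_red (winv (free_red w) @ free_red (w @ winv w))"
    by (simp only: free_red_cancel_winv append_Nil2)
  also have "\<dots> = free_red ((winv (free_red w) @ w) @ winv w)"
    by (simp only: free_red_append_right append_assoc)
  also have "\<dots> = free_red (free_red (winv (free_red w) @ w) @ winv w)"
    by (simp only: free_red_append_left)
  also have "\<dots> = free_red (free_red (winv (free_red w) @ free_red w) @ winv w)"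
    by (simp only: free_red_append_right)
  also have "\<dots> = free_red (winv w)" by simp
  finally show ?thesis by (simp add: ginv_def)
qed

lemma gmul_idem: "rd g \<Longrightarrow> gmul g g = g \<Longrightarrow> g = []"
proof -
  assume r: "rd g" and e: "gmul g g = g"
  have "gmul (ginv g) (gmul g g) = gmul (ginv g) g" using e by simp
  then have "gmul (gmul (ginv g) g) g = []" by (simp add: gmul_assoc[symmetric])
  then show ?thesis using r by (simp add: gmul_Nil_left free_red_rd)
qed

lemma free_red_idem_eq: "free_red (w @ w) = free_red w \<Longrightarrow> free_red w = []"
  using gmul_idem[of "free_red w"] by (simp add: gmul_def free_red_append_both)



lemma gmul_fr_left[simp]: "gmul (free_red x) y = gmul x y"
  by (simp add: gmul_def free_red_append_left)
lemma gmul_fr_right[simp]: "gmul x (free_red y) = gmul x y"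
  by (simp add: gmul_def free_red_append_right)

lemma gmul_Nil_rd: "rd y \<Longrightarrow> gmul [] y = y"
  by (simp add: gmul_Nil_left free_red_rd)
lemma gmul_rd_Nil: "rd y \<Longrightarrow> gmul y [] = y"
  by (simp add: gmul_Nil_right free_red_rd)

lemma ginv_unique: "rd z \<Longrightarrow> gmul z r = [] \<Longrightarrow> z = ginv r"
proof -
  assume "rd z" "gmul z r = []"
  have "z = gmul z (gmul r (ginv r))" using \<open>rd z\<close> by (simp add: gmul_rd_Nil)
  also have "\<dots> = gmul (gmul z r) (ginv r)" by (simp add: gmul_assoc)
  also have "\<dots> = ginv r" using \<open>gmul z r = []\<close> by (simp add: gmul_Nil_rd)
  finally show ?thesis .
qed

lemma gmul_cancel_left[simp]: "gmul (ginv g) (gmul g t) = gmul [] t"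
  by (simp add: gmul_assoc[symmetric])

lemma gmul_cancel_left2[simp]: "gmul g (gmul (ginv g) t) = gmul [] t"
  by (simp add: gmul_assoc[symmetric])

lemma ginv_gmul: "ginv (gmul g s) = gmul (ginv s) (ginv g)"
proof -
  have "gmul (gmul (ginv s) (ginv g)) (gmul g s) = gmul (ginv s) (gmul (gmul (ginv g) g) s)"
    by (simp add: gmul_assoc)
  also have "\<dots> = []" by (simp add: gmul_Nil_left)
  finally show ?thesis by (intro ginv_unique[symmetric]) auto
qed

lemma gmul_translate: "gmul (ginv (gmul g s)) (gmul g t) = gmul (ginv s) t"
proof -
  have "gmul (ginv (gmul g s)) (gmul g t) = gmul (ginv s) (gmul (gmul (ginv g) g) t)"
    by (simp add: ginv_gmul gmul_assoc)
  also have "\<dots> = gmul (ginv s) t" by (simp add: gmul_Nil_left)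
  finally show ?thesis .
qed

definition RW :: "'a word set" where "RW = {w. rd w}"

definition clo :: "nat \<Rightarrow> 'a word set \<Rightarrow> bool" where
  "clo n C \<longleftrightarrow> (\<forall>s\<in>C. \<forall>t\<in>C. length (gmul (ginv s) t) < n \<longrightarrow>
      (\<forall>k. gmul s (take k (gmul (ginv s) t)) \<in> C))"

definition cl :: "nat \<Rightarrow> 'a word set \<Rightarrow> 'a word set" where
  "cl n A = \<Inter>{C. clo n C \<and> A \<subseteq> C}"

definition tr :: "'a word \<Rightarrow> 'a word set \<Rightarrow> 'a word set" where
  "tr g A = gmul g ` A"

lemma clo_Inter: "(\<And>C. C \<in> S \<Longrightarrow> clo n C) \<Longrightarrow> clo n (\<Inter>S)"
  unfolding clo_def by blast

lemma clo_cl[simp]: "clo n (cl n A)"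
  unfolding cl_def by (rule clo_Inter) auto

lemma cl_ext: "A \<subseteq> cl n A"
  unfolding cl_def by auto

lemma cl_least: "clo n B \<Longrightarrow> A \<subseteq> B \<Longrightarrow> cl n A \<subseteq> B"
  unfolding cl_def by auto

lemma cl_closed: "clo n A \<Longrightarrow> cl n A = A"
  by (meson cl_ext cl_least order_refl subset_antisym)

lemma cl_mono: "A \<subseteq> B \<Longrightarrow> cl n A \<subseteq> cl n B"
  by (meson cl_ext cl_least clo_cl order_trans)

lemma cl_un_left: "cl n (cl n A \<union> B) = cl n (A \<union> B)"
  apply (rule subset_antisym)
   apply (rule cl_least, simp)
   apply (meson Un_mono Un_upper1 cl_ext cl_least clo_cl order_trans sup.cobounded2 le_supI)
  apply (rule cl_mono) using cl_ext by blast

lemma cl_un_right: "cl n (A \<union> cl n B) = cl n (A \<union> B)"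
  using cl_un_left[of n B A] by (simp add: Un_commute)

lemma cl_cl[simp]: "cl n (cl n A) = cl n A"
  by (simp add: cl_closed)

lemma clo_RW: "clo n RW"
  unfolding clo_def RW_def by auto

lemma cl_RW: "A \<subseteq> RW \<Longrightarrow> cl n A \<subseteq> RW"
  by (rule cl_least[OF clo_RW])

lemma tr_tr: "tr g (tr h A) = tr (gmul g h) A"
  unfolding tr_def by (auto simp: gmul_assoc image_image)

lemma tr_Nil: "A \<subseteq> RW \<Longrightarrow> tr [] A = A"
  unfolding tr_def RW_def by (force simp: gmul_Nil_rd)

lemma tr_RW: "tr g A \<subseteq> RW"
  unfolding tr_def RW_def by auto

lemma tr_un: "tr g (A \<union> B) = tr g A \<union> tr g B"
  unfolding tr_def by auto

lemma tr_insert: "tr g (insert a A) = insert (gmul g a) (tr g A)"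
  unfolding tr_def by auto

lemma tr_empty[simp]: "tr g {} = {}"
  unfolding tr_def by auto

lemma clo_tr: "clo n C \<Longrightarrow> clo n (tr g C)"
  unfolding clo_def tr_def
  by (auto simp: gmul_translate gmul_assoc)

lemma tr_cl: "A \<subseteq> RW \<Longrightarrow> tr g (cl n A) = cl n (tr g A)"
proof (rule subset_antisym)
  assume A: "A \<subseteq> RW"
  have "cl n A \<subseteq> tr (ginv g) (cl n (tr g A))"
  proof (rule cl_least)
    show "clo n (tr (ginv g) (cl n (tr g A)))" by (rule clo_tr) simp
    have "tr (ginv g) (tr g A) = A" using A by (simp add: tr_tr tr_Nil)
    then show "A \<subseteq> tr (ginv g) (cl n (tr g A))"
      using cl_ext[of "tr g A" n] unfolding tr_def by blast
  qed
  then have "tr g (cl n A) \<subseteq> tr g (tr (ginv g) (cl n (tr g A)))"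
    unfolding tr_def by blast
  also have "\<dots> = cl n (tr g A)"
    by (simp add: tr_tr tr_Nil cl_RW tr_RW)
  finally show "tr g (cl n A) \<subseteq> cl n (tr g A)" .
next
  show "cl n (tr g A) \<subseteq> tr g (cl n A)"
  proof (rule cl_least)
    show "clo n (tr g (cl n A))" by (rule clo_tr) simp
    show "tr g A \<subseteq> tr g (cl n A)" using cl_ext[of A n] unfolding tr_def by blast
  qed
qed

type_synonym 'a mel = "'a word set \<times> 'a word"

definition one :: "nat \<Rightarrow> 'a mel" where "one n = (cl n {[]}, [])"

definition mul :: "nat \<Rightarrow> 'a mel \<Rightarrow> 'a mel \<Rightarrow> 'a mel" where
  "mul n x y = (cl n (fst x \<union> tr (snd x) (fst y)), gmul (snd x) (snd y))"

definition iv :: "'a mel \<Rightarrow> 'a mel" where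
  "iv x = (tr (ginv (snd x)) (fst x), ginv (snd x))"

definition mx :: "nat \<Rightarrow> 'a mel \<Rightarrow> 'a mel" where
  "mx n x = (cl n {[], snd x}, snd x)"

definition Car :: "nat \<Rightarrow> 'a mel set" where
  "Car n = {x. fst x \<subseteq> RW \<and> clo n (fst x) \<and> [] \<in> fst x \<and> snd x \<in> fst x}"

lemma CarD: "x \<in> Car n \<Longrightarrow> fst x \<subseteq> RW \<and> clo n (fst x) \<and> [] \<in> fst x \<and> snd x \<in> fst x \<and> rd (snd x)"
  unfolding Car_def RW_def by auto

lemma one_Car: "one n \<in> Car n"
  unfolding one_def Car_def using cl_RW[of "{[]}" n] cl_ext[of "{[]}" n] by (auto simp: RW_def)

lemma mul_Car: "x \<in> Car n \<Longrightarrow> y \<in> Car n \<Longrightarrow> mul n x y \<in> Car n"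
  using cl_RW[of "fst x \<union> tr (snd x) (fst y)" n] tr_RW[of "snd x" "fst y"]
  unfolding mul_def Car_def
  using cl_ext[of "fst x \<union> tr (snd x) (fst y)" n]
  by (auto intro!: cl_RW simp: tr_def RW_def)

lemma iv_Car: "x \<in> Car n \<Longrightarrow> iv x \<in> Car n"
  unfolding iv_def Car_def
proof (clarsimp, intro conjI)
  fix A g assume "A \<subseteq> RW" "clo n A" "[] \<in> A" "g \<in> A"
  show "tr (ginv g) A \<subseteq> RW" by (rule tr_RW)
  show "clo n (tr (ginv g) A)" by (rule clo_tr) fact
  show "[] \<in> tr (ginv g) A" unfolding tr_def by (rule image_eqI[of _ _ g]) (simp_all add: \<open>g \<in> A\<close>)
  have "ginv g = gmul (ginv g) []" by (simp add: gmul_rd_Nil)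
  then show "ginv g \<in> tr (ginv g) A" using \<open>[] \<in> A\<close> unfolding tr_def by blast
qed

lemma mx_Car: "x \<in> Car n \<Longrightarrow> mx n x \<in> Car n"
  unfolding mx_def Car_def using cl_ext[of "{[], snd x}" n]
  by (auto intro!: cl_RW)

lemma mul_assoc: "x \<in> Car n \<Longrightarrow> y \<in> Car n \<Longrightarrow> z \<in> Car n \<Longrightarrow>
   mul n (mul n x y) z = mul n x (mul n y z)"
proof -
  assume x: "x \<in> Car n" and y: "y \<in> Car n" and z: "z \<in> Car n"
  obtain A g B h C k where xyz: "x = (A,g)" "y = (B,h)" "z = (C,k)" by (cases x, cases y, cases z)
  have B: "B \<union> tr h C \<subseteq> RW" using y xyz by (auto dest!: CarD simp: tr_RW)
  have "tr g (cl n (B \<union> tr h C)) = cl n (tr g B \<union> tr (gmul g h) C)"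
    using B by (simp add: tr_cl tr_un tr_tr)
  then show ?thesis using xyz
    by (simp add: mul_def gmul_assoc cl_un_left cl_un_right Un_assoc)
qed

lemma mul_one_left: "x \<in> Car n \<Longrightarrow> mul n (one n) x = x"
proof -
  assume x: "x \<in> Car n"
  obtain A g where xx: "x = (A,g)" by (cases x)
  from x xx have "A \<subseteq> RW" "clo n A" "[] \<in> A" "rd g" by (auto dest!: CarD)
  then show ?thesis using xx
    by (simp add: mul_def one_def cl_un_left tr_Nil gmul_Nil_rd cl_closed insert_absorb)
qed

lemma mul_one_right: "x \<in> Car n \<Longrightarrow> mul n x (one n) = x"
proof -
  assume x: "x \<in> Car n"
  obtain A g where xx: "x = (A,g)" by (cases x)
  from x xx have "A \<subseteq> RW" "clo n A" "g \<in> A" "rd g" by (auto dest!: CarD)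
  then show ?thesis using xx
    by (simp add: mul_def one_def cl_un_right tr_cl RW_def tr_insert gmul_rd_Nil cl_closed insert_absorb)
qed

lemma mul_iv: "x \<in> Car n \<Longrightarrow> mul n x (iv x) = (fst x, [])"
proof -
  assume x: "x \<in> Car n"
  obtain A g where xx: "x = (A,g)" by (cases x)
  from x xx have "A \<subseteq> RW" "clo n A" by (auto dest!: CarD)
  then show ?thesis using xx
    by (simp add: mul_def iv_def tr_tr tr_Nil cl_closed)
qed

lemma iv_mul: "x \<in> Car n \<Longrightarrow> mul n (iv x) x = (fst (iv x), [])"
proof -
  assume x: "x \<in> Car n"
  obtain A g where xx: "x = (A,g)" by (cases x)
  from x xx have "A \<subseteq> RW" "clo n A" by (auto dest!: CarD)
  then show ?thesis using xx
    by (simp add: mul_def iv_def tr_tr tr_Nil cl_closed clo_tr)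
qed

lemma mul_idem_left: "x \<in> Car n \<Longrightarrow> clo n Ee \<Longrightarrow> fst x \<subseteq> Ee \<Longrightarrow> Ee \<subseteq> RW \<Longrightarrow> mul n (Ee, []) x = (Ee, snd x)"
  by (cases x) (auto simp: mul_def tr_Nil gmul_Nil_rd cl_closed Un_absorb2 dest!: CarD)

lemma iv_iv: "x \<in> Car n \<Longrightarrow> iv (iv x) = x"
proof -
  assume x: "x \<in> Car n"
  obtain A g where xx: "x = (A,g)" by (cases x)
  from x xx have "A \<subseteq> RW" "rd g" by (auto dest!: CarD)
  moreover have "ginv (ginv g) = g" if "rd g"
    using ginv_unique[of g "ginv g"] that by simp
  ultimately show ?thesis using xx by (simp add: iv_def tr_tr tr_Nil)
qed

lemma mul_snd: "snd (mul n x y) = gmul (snd x) (snd y)" by (simp add: mul_def)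

lemma idem_snd: "x \<in> Car n \<Longrightarrow> mul n x x = x \<Longrightarrow> snd x = []"
  using gmul_idem[of "snd x"] by (metis CarD mul_snd)

lemma idem_form: "x \<in> Car n \<Longrightarrow> mul n x x = x \<Longrightarrow> x = (fst x, [])"
  using idem_snd by (metis prod.collapse)

lemma mul_idems: "x \<in> Car n \<Longrightarrow> y \<in> Car n \<Longrightarrow> snd x = [] \<Longrightarrow> snd y = [] \<Longrightarrow>
   mul n x y = (cl n (fst x \<union> fst y), [])"
  by (auto simp: mul_def tr_Nil gmul_Nil_rd dest!: CarD)

lemma inv_axioms_model:
  assumes "x \<in> Car n" "y \<in> Car n" "z \<in> Car n"
  shows "mul n (mul n x y) z = mul n x (mul n y z)"
    "mul n (one n) x = x" "mul n x (one n) = x"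
    "mul n (mul n x (iv x)) x = x" "mul n (mul n (iv x) x) (iv x) = iv x"
    "mul n x x = x \<Longrightarrow> mul n y y = y \<Longrightarrow> mul n x y = mul n y x"
proof -
  show "mul n (mul n x y) z = mul n x (mul n y z)" using assms by (rule mul_assoc)
  show "mul n (one n) x = x" "mul n x (one n) = x" using assms by (auto intro: mul_one_left mul_one_right)
  have x: "fst x \<subseteq> RW" "clo n (fst x)" using assms by (auto dest: CarD)
  show "mul n (mul n x (iv x)) x = x" using assms x
    by (simp add: mul_iv mul_idem_left)
  have ix: "iv x \<in> Car n" using assms(1) by (rule iv_Car)
  then have "fst (iv x) \<subseteq> RW" "clo n (fst (iv x))" by (auto dest: CarD)
  then show "mul n (mul n (iv x) x) (iv x) = iv x" using assms ix
    by (simp add: iv_mul mul_idem_left)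
  assume "mul n x x = x" "mul n y y = y"
  then show "mul n x y = mul n y x" using assms idem_snd[of x n] idem_snd[of y n]
    by (simp add: mul_idems Un_commute)
qed



fun evX :: "nat \<Rightarrow> 'a ftm \<Rightarrow> 'a mel" where
  "evX n (G a) = (cl n {[], [(a,False)]}, [(a,False)])"
| "evX n E = one n"
| "evX n (M s t) = mul n (evX n s) (evX n t)"
| "evX n (I t) = iv (evX n t)"
| "evX n (Mx t) = mx n (evX n t)"

lemma rd_single[simp]: "rd [x]" by simp

lemma free_red_single[simp]: "free_red [x] = [x]"
  by (simp add: free_red_rd)

lemma evX_Car: "evX n t \<in> Car n"
proof (induction t)
  case (G a)
  have "{[], [(a,False)]} \<subseteq> RW" by (simp add: RW_def)
  then show ?case unfolding Car_def using cl_ext[of "{[], [(a,False)]}" n] cl_RW[of "{[], [(a,False)]}" n]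
    by auto
qed (auto intro: one_Car mul_Car iv_Car mx_Car)

lemma tword_I: "tword (I t) = winv (tword t)" by (simp add: winv_def)

lemma evX_snd: "snd (evX n t) = free_red (tword t)"
  by (induction t) (simp_all add: one_def mul_def iv_def mx_def gmul_def free_red_append_both
      ginv_free_red winv_def)

lemma itms_M: "a \<in> itms X \<Longrightarrow> b \<in> itms X \<Longrightarrow> M a b \<in> itms X" by (simp add: itms_def)
lemma itms_I: "a \<in> itms X \<Longrightarrow> I a \<in> itms X" by (simp add: itms_def)
lemma itms_E: "E \<in> itms X" by (simp add: itms_def)

lemma fim_sub_ev: "(u,v) \<in> fim_cong X \<Longrightarrow> evX n u = evX n v"
proof -
  assume uv: "(u,v) \<in> fim_cong X"
  define \<theta> where "\<theta> = {(a,b). a \<in> itms X \<and> b \<in> itms X \<and> evX n a = evX n b}"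
  have ic: "icong (itms X) \<theta>"
    unfolding icong_def \<theta>_def equiv_def refl_on_def sym_def trans_def
    by (auto intro: itms_M itms_I)
  have im: "inv_monoid_rel (itms X) (\<lambda>a b. (a,b) \<in> \<theta>) M E I"
    unfolding inv_monoid_rel_def \<theta>_def
    using inv_axioms_model[OF evX_Car evX_Car evX_Car]
    by (auto intro: itms_M itms_I itms_E)
  have "fim_cong X \<subseteq> \<theta>" unfolding fim_cong_def using ic im by blast
  with uv show ?thesis unfolding \<theta>_def by auto
qed

lemma fim_sub_red: "(u,v) \<in> fim_cong X \<Longrightarrow> free_red (tword u) = free_red (tword v)"
  using fim_sub_ev[of u v X 0] by (metis evX_snd)

lemma fim_memI: "(\<And>\<theta>. icong (itms X) \<theta> \<Longrightarrow> inv_monoid_rel (itms X) (\<lambda>a b. (a,b) \<in> \<theta>) M E I \<Longrightarrow> p \<in> \<theta>)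
   \<Longrightarrow> p \<in> fim_cong X"
  unfolding fim_cong_def by blast

lemma fim_memD: "p \<in> fim_cong X \<Longrightarrow> icong (itms X) \<theta> \<Longrightarrow> inv_monoid_rel (itms X) (\<lambda>a b. (a,b) \<in> \<theta>) M E I
   \<Longrightarrow> p \<in> \<theta>"
  unfolding fim_cong_def by blast

lemma fim_trans: "(a,b) \<in> fim_cong X \<Longrightarrow> (b,c) \<in> fim_cong X \<Longrightarrow> (a,c) \<in> fim_cong X"
proof (rule fim_memI)
  fix \<theta> assume h: "(a,b) \<in> fim_cong X" "(b,c) \<in> fim_cong X" "icong (itms X) \<theta>"
    "inv_monoid_rel (itms X) (\<lambda>a b. (a,b) \<in> \<theta>) M E I"
  then have "(a,b) \<in> \<theta>" "(b,c) \<in> \<theta>" "trans \<theta>" by (auto dest: fim_memD simp: icong_def equiv_def)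
  then show "(a,c) \<in> \<theta>" by (meson transD)
qed

lemma fim_sym: "(a,b) \<in> fim_cong X \<Longrightarrow> (b,a) \<in> fim_cong X"
proof (rule fim_memI)
  fix \<theta> assume h: "(a,b) \<in> fim_cong X" "icong (itms X) \<theta>"
    "inv_monoid_rel (itms X) (\<lambda>a b. (a,b) \<in> \<theta>) M E I"
  then have "(a,b) \<in> \<theta>" "sym \<theta>" by (auto dest: fim_memD simp: icong_def equiv_def)
  then show "(b,a) \<in> \<theta>" by (meson symD)
qed

lemma fim_M: "(a,b) \<in> fim_cong X \<Longrightarrow> (c,d) \<in> fim_cong X \<Longrightarrow> (M a c, M b d) \<in> fim_cong X"
proof (rule fim_memI)
  fix \<theta> assume h: "(a,b) \<in> fim_cong X" "(c,d) \<in> fim_cong X" "icong (itms X) \<theta>"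
    "inv_monoid_rel (itms X) (\<lambda>a b. (a,b) \<in> \<theta>) M E I"
  then have "(a,b) \<in> \<theta>" "(c,d) \<in> \<theta>" by (auto dest: fim_memD)
  with h(3) show "(M a c, M b d) \<in> \<theta>" unfolding icong_def by blast
qed

lemma fim_refl: "a \<in> itms X \<Longrightarrow> (a,a) \<in> fim_cong X"
proof (rule fim_memI)
  fix \<theta> assume "a \<in> itms X" "icong (itms X) \<theta>"
  then show "(a,a) \<in> \<theta>" unfolding icong_def equiv_def refl_on_def by blast
qed

lemma word_tm_Nil[simp]: "word_tm [] = E" by (simp add: word_tm_def)

lemma word_tm_Cons: "word_tm (x # w) = M (if snd x then I (G (fst x)) else G (fst x)) (word_tm w)"
  by (cases x) (simp add: word_tm_def)

definition Pw :: "'a word \<Rightarrow> 'a word set" where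
  "Pw w = {free_red (take k w) | k. True}"

lemma Pw_RW: "Pw w \<subseteq> RW" by (auto simp: Pw_def RW_def)

lemma free_red_Cons_gmul: "free_red (x # u) = gmul [x] (free_red u)"
  using free_red_append_right[of "[x]" u] by (simp add: gmul_def)

lemma Pw_Nil: "Pw [] = {[]}" by (simp add: Pw_def)

lemma Pw_Cons: "Pw (x # w) = insert [] (tr [x] (Pw w))"
proof (rule set_eqI)
  fix z show "z \<in> Pw (x # w) \<longleftrightarrow> z \<in> insert [] (tr [x] (Pw w))"
  proof
    assume "z \<in> Pw (x # w)"
    then obtain k where z: "z = free_red (take k (x # w))" by (auto simp: Pw_def)
    show "z \<in> insert [] (tr [x] (Pw w))"
    proof (cases k)
      case 0 then show ?thesis using z by simp
    next
      case (Suc j)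
      have zz: "z = gmul [x] (free_red (take j w))" using z Suc
        by (simp add: free_red_Cons_gmul del: gmul_fr_right)
      have "free_red (take j w) \<in> Pw w" by (auto simp: Pw_def)
      then have "z \<in> tr [x] (Pw w)" unfolding tr_def zz by (rule imageI)
      then show ?thesis by simp
    qed
  next
    assume "z \<in> insert [] (tr [x] (Pw w))"
    then show "z \<in> Pw (x # w)"
    proof
      assume "z = []" then show ?thesis unfolding Pw_def by (auto intro: exI[of _ 0])
    next
      assume "z \<in> tr [x] (Pw w)"
      then obtain j where "z = gmul [x] (free_red (take j w))" unfolding tr_def Pw_def by blast
      then have "z = free_red (take (Suc j) (x # w))" by (simp add: free_red_Cons_gmul del: gmul_fr_right)
      then show ?thesis unfolding Pw_def by blast
    qed
  qed
qed

lemma evX_letter: "evX n (if snd x then I (G (fst x)) else G (fst x)) = (cl n {[], [x]}, [x])"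
proof (cases x)
  case (Pair a b)
  show ?thesis
  proof (cases b)
    case True
    have gi: "ginv [(a,False)] = [(a,True)]" by (simp add: ginv_def winv_def)
    have "tr [(a,True)] (cl n {[], [(a,False)]}) = cl n (tr [(a,True)] {[], [(a,False)]})"
      by (rule tr_cl) (simp add: RW_def)
    also have "tr [(a,True)] {[], [(a,False)]} = {[(a,True)], []}"
      by (simp add: tr_insert gmul_def free_red_Cons step_def cancel_def)
    finally show ?thesis using Pair True by (simp add: iv_def gi insert_commute)
  qed (simp add: Pair)
qed

lemma evX_word: "evX n (word_tm w) = (cl n (Pw w), free_red w)"
proof (induction w)
  case Nil then show ?case by (simp add: one_def Pw_Nil)
next
  case (Cons x w)
  have "evX n (word_tm (x # w)) = mul n (cl n {[], [x]}, [x]) (cl n (Pw w), free_red w)"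
    using Cons by (simp add: word_tm_Cons evX_letter del: evX.simps(4) evX.simps(1))
  also have "\<dots> = (cl n ({[], [x]} \<union> tr [x] (Pw w)), free_red (x # w))"
    by (simp add: mul_def tr_cl Pw_RW cl_un_left cl_un_right free_red_Cons_gmul)
  also have "{[], [x]} \<union> tr [x] (Pw w) = Pw (x # w)"
  proof -
    have "[x] \<in> tr [x] (Pw w)" unfolding tr_def Pw_def
      by (rule image_eqI[of _ _ "[]"]) (auto simp: gmul_def intro: exI[of _ 0])
    then show ?thesis by (auto simp: Pw_Cons)
  qed
  finally show ?case .
qed

lemma cl_Pw: "length r < n \<Longrightarrow> rd r \<Longrightarrow> cl n {[], r} = cl n (Pw r)"
proof (rule subset_antisym)
  assume r: "length r < n" "rd r"
  have "[] \<in> Pw r" unfolding Pw_def by (auto intro: exI[of _ 0])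
  moreover have "r \<in> Pw r" unfolding Pw_def using r
    by (auto intro!: exI[of _ "length r"] simp: free_red_rd)
  ultimately show "cl n {[], r} \<subseteq> cl n (Pw r)" by (intro cl_mono) auto
  show "cl n (Pw r) \<subseteq> cl n {[], r}"
  proof (rule cl_least[OF clo_cl], rule subsetI)
    fix z assume "z \<in> Pw r"
    then obtain k where z: "z = free_red (take k r)" by (auto simp: Pw_def)
    have c: "clo n (cl n {[], r})" by simp
    have "[] \<in> cl n {[], r}" "r \<in> cl n {[], r}" using cl_ext[of "{[], r}" n] by auto
    moreover have "gmul (ginv []) r = r" using r by (simp add: ginv_def winv_def gmul_Nil_rd)
    ultimately have "gmul [] (take k r) \<in> cl n {[], r}"
      using c r unfolding clo_def by force
    then show "z \<in> cl n {[], r}" using z by (simp add: gmul_Nil_left)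
  qed
qed

lemma mx_word: "x \<in> Car n \<Longrightarrow> length (snd x) < n \<Longrightarrow> mx n x = evX n (word_tm (snd x))"
proof -
  assume "x \<in> Car n" "length (snd x) < n"
  then have "rd (snd x)" by (auto dest: CarD)
  with \<open>length (snd x) < n\<close> show ?thesis by (simp add: mx_def evX_word cl_Pw free_red_rd)
qed



fun gY :: "nat \<Rightarrow> ('b ftm \<Rightarrow> 'a ftm) \<Rightarrow> 'b ftm \<Rightarrow> 'a mel" where
  "gY n f (G y) = evX n (f (G y))"
| "gY n f E = one n"
| "gY n f (M s t) = mul n (gY n f s) (gY n f t)"
| "gY n f (I t) = iv (gY n f t)"
| "gY n f (Mx t) = mx n (gY n f t)"

fun bnd :: "('b ftm \<Rightarrow> 'a ftm) \<Rightarrow> 'b ftm \<Rightarrow> nat" where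
  "bnd f (G y) = 0"
| "bnd f E = 0"
| "bnd f (M s t) = max (bnd f s) (bnd f t)"
| "bnd f (I t) = bnd f t"
| "bnd f (Mx t) = max (bnd f t) (Suc (length (free_red (tword (f t)))))"

fun pw :: "nat \<Rightarrow> 'c ftm \<Rightarrow> 'c ftm" where
  "pw 0 a = E" | "pw (Suc k) a = M a (pw k a)"

lemma gY_Car: "gY n f s \<in> Car n"
  by (induction s) (auto intro: one_Car mul_Car iv_Car mx_Car evX_Car)

lemma ftms_simps[simp]:
  "M a b \<in> ftms Y \<longleftrightarrow> a \<in> ftms Y \<and> b \<in> ftms Y"
  "I a \<in> ftms Y \<longleftrightarrow> a \<in> ftms Y" "Mx a \<in> ftms Y \<longleftrightarrow> a \<in> ftms Y" "E \<in> ftms Y"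
  by (auto simp: ftms_def)

lemma finv_sub_gY:
  assumes R: "\<forall>(p,q)\<in>R. im_tm p \<in> ftms Y \<and> im_tm q \<in> ftms Y \<and> gY n f (im_tm p) = gY n f (im_tm q)"
    and st: "(s,t) \<in> finv_cong Y R"
  shows "gY n f s = gY n f t"
proof -
  define \<theta> where "\<theta> = {(a,b). a \<in> ftms Y \<and> b \<in> ftms Y \<and> gY n f a = gY n f b}"
  have fc: "fcong (ftms Y) \<theta>"
    unfolding fcong_def icong_def \<theta>_def equiv_def refl_on_def sym_def trans_def
    by auto
  have im: "inv_monoid_rel (ftms Y) (\<lambda>a b. (a,b) \<in> \<theta>) M E I"
    unfolding inv_monoid_rel_def \<theta>_def
    using inv_axioms_model[OF gY_Car gY_Car gY_Car]
    by auto
  have sg: "sigma_rel (ftms Y) (\<lambda>a b. (a,b) \<in> \<theta>) M (Mx s) s \<and>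
        (\<forall>t\<in>ftms Y. sigma_rel (ftms Y) (\<lambda>a b. (a,b) \<in> \<theta>) M t s \<longrightarrow>
            leq_rel (\<lambda>a b. (a,b) \<in> \<theta>) M I t (Mx s))" if s: "s \<in> ftms Y" for s
  proof
    obtain A g where x: "gY n f s = (A,g)" by (cases "gY n f s")
    have xc: "(A,g) \<in> Car n" using gY_Car[of n f s] x by simp
    then have A: "A \<subseteq> RW" "clo n A" "[] \<in> A" "g \<in> A" using CarD[OF xc] by auto
    have Ac: "(A, []) \<in> Car n" using A by (simp add: Car_def)
    have e: "gY n f (M s (I s)) = (A, [])" using mul_iv[OF xc] x by simp
    have ee: "mul n (A,[]) (A,[]) = (A,[])" using mul_idem_left[OF Ac A(2) _ A(1)] by simp
    have mxs: "mx n (A,g) \<in> Car n" using xc by (rule mx_Car)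
    have "fst (mx n (A,g)) \<subseteq> A" using A by (simp add: mx_def cl_least)
    then have em: "mul n (A,[]) (mx n (A,g)) = (A,g)"
      using mul_idem_left[OF mxs A(2) _ A(1)] by (simp add: mx_def)
    have es: "mul n (A,[]) (A,g) = (A,g)" using mul_idem_left[OF xc A(2) _ A(1)] by simp
    show "sigma_rel (ftms Y) (\<lambda>a b. (a,b) \<in> \<theta>) M (Mx s) s"
      unfolding sigma_rel_def \<theta>_def
      by (rule bexI[of _ "M s (I s)"]) (use s e ee em es x in auto)
    show "\<forall>t\<in>ftms Y. sigma_rel (ftms Y) (\<lambda>a b. (a,b) \<in> \<theta>) M t s \<longrightarrow>
            leq_rel (\<lambda>a b. (a,b) \<in> \<theta>) M I t (Mx s)"
    proof (intro ballI impI)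
      fix t assume t: "t \<in> ftms Y" and "sigma_rel (ftms Y) (\<lambda>a b. (a,b) \<in> \<theta>) M t s"
      then obtain e where "e \<in> ftms Y" and e1: "mul n (gY n f e) (gY n f e) = gY n f e"
        and e2: "mul n (gY n f e) (gY n f t) = mul n (gY n f e) (gY n f s)"
        unfolding sigma_rel_def \<theta>_def by auto
      have ge: "snd (gY n f e) = []" using idem_snd[OF gY_Car e1] .
      obtain B h where y: "gY n f t = (B,h)" by (cases "gY n f t")
      have yc: "(B,h) \<in> Car n" using gY_Car[of n f t] y by simp
      then have B: "B \<subseteq> RW" "clo n B" "[] \<in> B" "h \<in> B" "rd h" using CarD[OF yc] by auto
      have "snd (mul n (gY n f e) (gY n f t)) = h" using ge y B by (simp add: mul_def gmul_Nil_rd)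
      moreover have "snd (mul n (gY n f e) (gY n f s)) = g" using ge x CarD[OF xc]
        by (simp add: mul_def gmul_Nil_rd)
      ultimately have hg: "h = g" using e2 by simp
      have Bc: "(B, []) \<in> Car n" using B by (simp add: Car_def)
      have ti: "mul n (gY n f t) (iv (gY n f t)) = (B, [])" using mul_iv[OF yc] y by simp
      have "fst (mx n (A,g)) \<subseteq> B" using B hg by (simp add: mx_def cl_least)
      then have "mul n (B,[]) (mx n (A,g)) = (B,g)"
        using mul_idem_left[OF mxs B(2) _ B(1)] by (simp add: mx_def)
      then have "gY n f (M (M t (I t)) (Mx s)) = gY n f t" using ti x y hg by simp
      then show "leq_rel (\<lambda>a b. (a,b) \<in> \<theta>) M I t (Mx s)"
        unfolding leq_rel_def \<theta>_def using t s by simp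
    qed
  qed
  have fi: "finv_monoid_rel (ftms Y) (\<lambda>a b. (a,b) \<in> \<theta>) M E I Mx"
    unfolding finv_monoid_rel_def using im sg by blast
  have Rs: "\<forall>(p,q) \<in> R. (im_tm p, im_tm q) \<in> \<theta>" using R unfolding \<theta>_def by auto
  have "finv_cong Y R \<subseteq> \<theta>" unfolding finv_cong_def using fc fi Rs by blast
  with st show ?thesis unfolding \<theta>_def by auto
qed

lemma finv_R: "(p,q) \<in> R \<Longrightarrow> (im_tm p, im_tm q) \<in> finv_cong Y R"
  unfolding finv_cong_def by blast



lemma gY_short:
  assumes f4: "\<forall>s\<in>ftms Y. \<forall>t\<in>ftms Y. (f (M s t), M (f s) (f t)) \<in> fim_cong X"
    and f5: "(f E, E) \<in> fim_cong X"
    and f6: "\<forall>s\<in>ftms Y. (f (I s), I (f s)) \<in> fim_cong X"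
    and f7: "\<forall>s\<in>ftms Y. (f (Mx s), fim_mx (f s)) \<in> fim_cong X"
  shows "s \<in> ftms Y \<Longrightarrow> bnd f s \<le> n \<Longrightarrow> gY n f s = evX n (f s)"
proof (induction s)
  case E then show ?case using fim_sub_ev[OF f5, of n] by simp
next
  case (M a b)
  then show ?case using fim_sub_ev[OF f4[rule_format, of a b], of n] by simp
next
  case (I a)
  then show ?case using fim_sub_ev[OF f6[rule_format, of a], of n] by simp
next
  case (Mx a)
  then have ih: "gY n f a = evX n (f a)" and l: "length (free_red (tword (f a))) < n" by auto
  have "gY n f (Mx a) = mx n (evX n (f a))" using ih by simp
  also have "\<dots> = evX n (word_tm (free_red (tword (f a))))"
    using mx_word[OF evX_Car] l by (simp add: evX_snd)
  also have "\<dots> = evX n (f (Mx a))"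
    using fim_sub_ev[OF f7[rule_format, of a], of n] Mx.prems by (simp add: fim_mx_def)
  finally show ?case .
qed simp

lemma gens_word: "gens (word_tm w) = fst ` set w"
  by (induction w) (auto simp: word_tm_Cons)

lemma im_ftms: "im_over Y p \<Longrightarrow> im_tm p \<in> ftms Y"
proof -
  assume h: "im_over Y p"
  have "gens (foldr (\<lambda>(v,u) t. M (Mx (word_tm v)) (M (word_tm u) t)) l E) \<subseteq> Y"
    if "\<forall>(v,u) \<in> set l. fst ` set v \<subseteq> Y \<and> fst ` set u \<subseteq> Y" for l
    using that
  proof (induction l)
    case (Cons a l)
    obtain v u where a: "a = (v,u)" by (cases a)
    show ?case using Cons a by (auto simp: gens_word)
  qed simp
  with h show ?thesis unfolding im_over_def im_tm_def ftms_def by (auto simp: gens_word)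
qed

lemma rd_replicate: "\<not> cancel x x \<Longrightarrow> rd (replicate k x)"
proof (induction k)
  case (Suc k) then show ?case by (cases k) auto
qed simp

lemma tword_pw: "tword (pw k (G a)) = replicate k (a, False)"
  by (induction k) auto

lemma word_tm_rep: "word_tm (replicate k (a, False)) = pw k (G a)"
  by (induction k) (auto simp: word_tm_Cons)

lemma clo_pair: "rd r \<Longrightarrow> n \<le> length r \<Longrightarrow> n \<le> length (ginv r) \<Longrightarrow> clo n {[], r}"
proof -
  assume h: "rd r" "n \<le> length r" "n \<le> length (ginv r)"
  have g0: "ginv [] = []" by (simp add: ginv_def winv_def)
  show ?thesis unfolding clo_def
    using h by (auto simp: g0 gmul_Nil_rd gmul_rd_Nil gmul_Nil_right free_red_rd)
qed

theorem mainTheorem13: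
  fixes X :: "'a set"
  assumes "X \<noteq> {}"
  shows "\<not> (\<exists>(Y :: 'b set) (R :: ('b imterm \<times> 'b imterm) set).
            finite Y \<and> finite R \<and> (\<forall>(p,q) \<in> R. im_over Y p \<and> im_over Y q) \<and>
            finv_iso_fim Y R X)"
proof
  assume "\<exists>(Y :: 'b set) (R :: ('b imterm \<times> 'b imterm) set).
            finite Y \<and> finite R \<and> (\<forall>(p,q) \<in> R. im_over Y p \<and> im_over Y q) \<and>
            finv_iso_fim Y R X"
  then obtain Y :: "'b set" and R :: "('b imterm \<times> 'b imterm) set" where
    finR: "finite R" and ov: "\<forall>(p,q) \<in> R. im_over Y p \<and> im_over Y q" and iso: "finv_iso_fim Y R X"
    by blast
  from iso obtain f :: "'b ftm \<Rightarrow> 'a ftm" where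
    f1: "\<forall>s\<in>ftms Y. f s \<in> itms X" and
    f2: "\<forall>s\<in>ftms Y. \<forall>t\<in>ftms Y. (s,t) \<in> finv_cong Y R \<longleftrightarrow> (f s, f t) \<in> fim_cong X" and
    f3: "\<forall>u\<in>itms X. \<exists>s\<in>ftms Y. (f s, u) \<in> fim_cong X" and
    f4: "\<forall>s\<in>ftms Y. \<forall>t\<in>ftms Y. (f (M s t), M (f s) (f t)) \<in> fim_cong X" and
    f5: "(f E, E) \<in> fim_cong X" and
    f6: "\<forall>s\<in>ftms Y. (f (I s), I (f s)) \<in> fim_cong X" and
    f7: "\<forall>s\<in>ftms Y. (f (Mx s), fim_mx (f s)) \<in> fim_cong X"
    unfolding finv_iso_fim_def by blast
  obtain x0 where x0: "x0 \<in> X" using assms by blast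
  have "G x0 \<in> itms X" using x0 by (simp add: itms_def)
  then obtain t0 where t0: "t0 \<in> ftms Y" "(f t0, G x0) \<in> fim_cong X" using f3 by blast
  define n where "n = 2 + bnd f t0 + (\<Sum>(p,q)\<in>R. bnd f (im_tm p) + bnd f (im_tm q))"
  have n2: "2 \<le> n" and bt0: "bnd f t0 \<le> n" unfolding n_def by auto
  have bR: "bnd f (im_tm p) \<le> n \<and> bnd f (im_tm q) \<le> n" if "(p,q) \<in> R" for p q
  proof -
    have "(\<lambda>(p,q). bnd f (im_tm p) + bnd f (im_tm q)) (p,q) \<le> (\<Sum>(p,q)\<in>R. bnd f (im_tm p) + bnd f (im_tm q))"
      by (rule member_le_sum[OF that _ finR]) auto
    then show ?thesis unfolding n_def by simp
  qed
  note short = gY_short[OF f4 f5 f6 f7]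
  have Rc: "\<forall>(p,q)\<in>R. im_tm p \<in> ftms Y \<and> im_tm q \<in> ftms Y \<and> gY n f (im_tm p) = gY n f (im_tm q)"
  proof (clarify)
    fix p q assume pq: "(p,q) \<in> R"
    have P: "im_tm p \<in> ftms Y" and Q: "im_tm q \<in> ftms Y" using ov pq by (auto intro: im_ftms)
    have "(f (im_tm p), f (im_tm q)) \<in> fim_cong X" using f2 P Q finv_R[OF pq] by blast
    then have "evX n (f (im_tm p)) = evX n (f (im_tm q))" by (rule fim_sub_ev)
    then show "im_tm p \<in> ftms Y \<and> im_tm q \<in> ftms Y \<and> gY n f (im_tm p) = gY n f (im_tm q)"
      using P Q bR[OF pq] short by simp
  qed
  have pwY: "pw k t0 \<in> ftms Y" for k using t0 by (induction k) auto
  have fpw: "(f (pw k t0), pw k (G x0)) \<in> fim_cong X" for k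
  proof (induction k)
    case 0 then show ?case using f5 by simp
  next
    case (Suc k)
    have "(f (M t0 (pw k t0)), M (f t0) (f (pw k t0))) \<in> fim_cong X" using f4 t0 pwY by blast
    moreover have "(M (f t0) (f (pw k t0)), M (G x0) (pw k (G x0))) \<in> fim_cong X"
      using fim_M[OF t0(2) Suc] .
    ultimately show ?case by (simp add: fim_trans)
  qed
  define T where "T = pw n t0"
  have TY: "T \<in> ftms Y" unfolding T_def by (rule pwY)
  have "free_red (tword (f T)) = free_red (replicate n (x0,False))"
    using fim_sub_red[OF fpw[of n]] unfolding T_def by (simp add: tword_pw)
  also have "\<dots> = replicate n (x0,False)"
    by (rule free_red_rd, rule rd_replicate) (simp add: cancel_def)
  finally have "fim_mx (f T) = pw n (G x0)" by (simp add: fim_mx_def word_tm_rep)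
  then have "(f (Mx T), pw n (G x0)) \<in> fim_cong X" using f7 TY by auto
  then have "(f (Mx T), f T) \<in> fim_cong X"
    using fim_trans fim_sym fpw[of n] unfolding T_def by blast
  then have "(Mx T, T) \<in> finv_cong Y R" using f2 TY by simp
  then have eqT: "gY n f (Mx T) = gY n f T" by (rule finv_sub_gY[OF Rc])
  have "gY n f t0 = evX n (G x0)"
    using short[OF t0(1) bt0] fim_sub_ev[OF t0(2), of n] by simp
  then have gpw: "gY n f (pw k t0) = evX n (pw k (G x0))" for k by (induction k) auto
  define r where "r = replicate n (x0,False)"
  have rr: "rd r" unfolding r_def by (rule rd_replicate) (simp add: cancel_def)
  have ev: "evX n (pw n (G x0)) = (cl n (Pw r), r)"
    using evX_word[of n r] rr by (simp add: r_def word_tm_rep free_red_rd)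
  have "mx n (cl n (Pw r), r) = (cl n (Pw r), r)"
    using eqT gpw[of n] ev unfolding T_def by simp
  then have clr: "cl n {[], r} = cl n (Pw r)" by (simp add: mx_def)
  have "ginv r = replicate n (x0,True)"
    unfolding ginv_def r_def winv_def
    by (simp add: rev_replicate, rule free_red_rd, rule rd_replicate) (simp add: cancel_def)
  then have "clo n {[], r}" using rr by (intro clo_pair) (auto simp: r_def)
  then have c1: "cl n {[], r} = {[], r}" by (rule cl_closed)
  have "[(x0,False)] = free_red (take 1 r)" using n2 unfolding r_def
    by (cases n) auto
  then have "[(x0,False)] \<in> Pw r" unfolding Pw_def by blast
  then have "[(x0,False)] \<in> cl n {[], r}" using clr cl_ext[of "Pw r" n] by auto
  then show False using c1 n2 unfolding r_def
    by (cases n) (auto simp: Cons_replicate_eq)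
qed

end
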